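(* Let $X$ be a Banach space with three closed linear subspaces $M,N,L$ such that $M\supsetneq L$. Then for each pair of positive numbers $(a,b)$ with $(a+1)(b+1)<2$, either there exists $u\in M$ with $\|u\|=1$ and $\operatorname{dist}(u,N)>a$, or there exists $v\in N$ with $\|v\|=1$ and $\operatorname{dist}(v,L)>b$. *)

theory Defs
  imports "HOL-Analysis.Analysis"
begin

end

theory Submission
  imports Defs
begin

lemma infdist_approx:
  assumes "A \<noteq> {}" "infdist x A < r"
  shows "\<exists>y\<in>A. dist x y < r"
proof -
  have "(INF a\<in>A. dist x a) < r" using assms by (simp add: infdist_notempty)
  moreover have "bdd_below ((\<lambda>a. dist x a) ` A)"
    by (rule bdd_belowI[of _ 0]) auto
  ultimately show ?thesis using assms(1) by (simp add: cINF_less_iff)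
qed

lemma riesz:
  fixes M L :: "'a::real_normed_vector set"
  assumes "subspace M" "subspace L" "closed L" "L \<subset> M" "0 < \<theta>" "\<theta> < 1"
  shows "\<exists>u\<in>M. norm u = 1 \<and> infdist u L \<ge> \<theta>"
proof -
  obtain x where x: "x \<in> M" "x \<notin> L" using assms(4) by blast
  have L0: "0 \<in> L" using assms(2) by (simp add: subspace_0)
  hence Lne: "L \<noteq> {}" by blast
  define d where "d = infdist x L"
  have dpos: "d > 0" unfolding d_def using infdist_pos_not_in_closed[OF assms(3) Lne x(2)] .
  have "d < d / \<theta>" using dpos assms(5,6) by (simp add: less_divide_eq)
  then obtain y where y: "y \<in> L" "dist x y < d / \<theta>"
    using infdist_approx[OF Lne] unfolding d_def by blast
  have xy: "x - y \<noteq> 0" using x y by auto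
  define r where "r = norm (x - y)"
  have rpos: "r > 0" using xy r_def by simp
  have rlt: "r < d / \<theta>" using y(2) by (simp add: r_def dist_norm)
  define u where "u = (1/r) *\<^sub>R (x - y)"
  have yM: "y \<in> M" using y assms(4) by blast
  have uM: "u \<in> M" unfolding u_def
    by (intro subspace_mul[OF assms(1)] subspace_diff[OF assms(1)] x yM)
  have nu: "norm u = 1" unfolding u_def using rpos r_def by simp
  have "infdist u L \<ge> d / r"
  proof -
    have "d / r \<le> dist u z" if z: "z \<in> L" for z
    proof -
      have w: "y + r *\<^sub>R z \<in> L"
        by (intro subspace_add[OF assms(2)] subspace_mul[OF assms(2)] y z)
      have "d \<le> dist x (y + r *\<^sub>R z)" unfolding d_def by (rule infdist_le[OF w])
      also have "x - (y + r *\<^sub>R z) = r *\<^sub>R (u - z)"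
        using rpos by (simp add: u_def algebra_simps)
      hence "dist x (y + r *\<^sub>R z) = r * dist u z"
        using rpos by (simp add: dist_norm)
      finally show ?thesis using rpos by (simp add: divide_le_eq mult.commute)
    qed
    thus ?thesis using Lne by (simp add: infdist_notempty cINF_greatest)
  qed
  moreover have "\<theta> < d / r" using rlt rpos dpos assms(5)
    by (simp add: less_divide_eq mult.commute)
  ultimately show ?thesis using uM nu by force
qed

theorem lemma2p7:
  fixes M N L :: "'a::banach set" and a b :: real
  assumes "subspace M" and "closed M"
    and "subspace N" and "closed N"
    and "subspace L" and "closed L"
    and "L \<subset> M"
    and "a > 0" and "b > 0" and "(a + 1) * (b + 1) < 2"
  shows "(\<exists>u\<in>M. norm u = 1 \<and> infdist u N > a) \<or>
         (\<exists>v\<in>N. norm v = 1 \<and> infdist v L > b)"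
proof (rule ccontr)
  assume "\<not> ?thesis"
  hence H1: "\<And>u. u \<in> M \<Longrightarrow> norm u = 1 \<Longrightarrow> infdist u N \<le> a"
    and H2: "\<And>v. v \<in> N \<Longrightarrow> norm v = 1 \<Longrightarrow> infdist v L \<le> b"
    by (auto simp: not_less)
  have s: "a + b + a * b < 1" using assms(10) by (simp add: algebra_simps)
  define e where "e = (1 - (a + b + a * b)) / 3"
  have epos: "e > 0" using s by (simp add: e_def)
  define \<delta> where "\<delta> = min 1 (e / (3 + a + b))"
  have dpos: "\<delta> > 0" using epos assms(8,9) by (simp add: \<delta>_def)
  have d1: "\<delta> \<le> 1" by (simp add: \<delta>_def)
  have d2: "\<delta> * (3 + a + b) \<le> e" using epos assms(8,9)
    by (simp add: \<delta>_def min_def le_divide_eq)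
  define \<theta> where "\<theta> = 1 - e"
  have ab: "a * b > 0" using assms(8,9) by simp
  have ab2: "0 < 1 + (a + (b + a * b))" using ab assms(8,9) by linarith
  have e1: "e < 1" unfolding e_def using ab2 by (simp add: field_simps)
  have th: "0 < \<theta>" "\<theta> < 1" using e1 epos by (simp_all add: \<theta>_def)
  obtain u where u: "u \<in> M" "norm u = 1" "infdist u L \<ge> \<theta>"
    using riesz[OF assms(1,5,6,7) th] by blast
  have N0: "0 \<in> N" using assms(3) by (simp add: subspace_0)
  have L0: "0 \<in> L" using assms(5) by (simp add: subspace_0)
  obtain n where n: "n \<in> N" "dist u n < a + \<delta>"
    using infdist_approx[of N u "a + \<delta>"] N0 H1[OF u(1,2)] dpos by force
  have nn: "norm n \<le> 1 + a + \<delta>"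
    using n(2) u(2) norm_triangle_ineq2[of n u] by (simp add: dist_norm norm_minus_commute)
  have "\<exists>w\<in>L. norm (n - w) \<le> norm n * (b + \<delta>)"
  proof (cases "n = 0")
    case True thus ?thesis using L0 by auto
  next
    case False
    define v where "v = (1 / norm n) *\<^sub>R n"
    have vN: "v \<in> N" unfolding v_def by (rule subspace_mul[OF assms(3) n(1)])
    have nv: "norm v = 1" using False by (simp add: v_def)
    obtain y where y: "y \<in> L" "dist v y < b + \<delta>"
      using infdist_approx[of L v "b + \<delta>"] L0 H2[OF vN nv] dpos by force
    have wL: "norm n *\<^sub>R y \<in> L" by (rule subspace_mul[OF assms(5) y(1)])
    have "n - norm n *\<^sub>R y = norm n *\<^sub>R (v - y)" using False
      by (simp add: v_def algebra_simps)
    hence "norm (n - norm n *\<^sub>R y) = norm n * dist v y" by (simp add: dist_norm)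
    also have "\<dots> \<le> norm n * (b + \<delta>)" using y(2) by (intro mult_left_mono) auto
    finally show ?thesis using wL by blast
  qed
  then obtain w where w: "w \<in> L" "norm (n - w) \<le> norm n * (b + \<delta>)" by blast
  have "\<theta> \<le> dist u w" using u(3) infdist_le[OF w(1), of u] by linarith
  also have "\<dots> \<le> dist u n + norm (n - w)"
    using dist_triangle[of u w n] by (simp add: dist_norm)
  also have "\<dots> \<le> (a + \<delta>) + (1 + a + \<delta>) * (b + \<delta>)"
  proof -
    have "norm n * (b + \<delta>) \<le> (1 + a + \<delta>) * (b + \<delta>)"
      using nn dpos assms(9) by (intro mult_right_mono) auto
    thus ?thesis using n(2) w(2) by linarith
  qed
  finally have A: "\<theta> \<le> (a + \<delta>) + (1 + a + \<delta>) * (b + \<delta>)" .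
  have "(a + \<delta>) + (1 + a + \<delta>) * (b + \<delta>) = a + b + a*b + \<delta> * (2 + a + b + \<delta>)"
    by (simp add: algebra_simps)
  also have "\<delta> * (2 + a + b + \<delta>) \<le> \<delta> * (3 + a + b)"
    using dpos d1 by (intro mult_left_mono) auto
  finally have "(a + \<delta>) + (1 + a + \<delta>) * (b + \<delta>) \<le> a + b + a*b + e" using d2 by linarith
  moreover have "3 * e = 1 - (a + b + a * b)" by (simp add: e_def)
  ultimately show False using A s epos unfolding \<theta>_def by linarith
qed

end
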